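(* Let $f:[0,1]^n\to[0,1]$ be continuous and polynomially bounded. Then there is an integer $t_0$ such that for every integer $t\ge t_0$, $$f(p)-\frac14\,\mathbb{P}_p\!\left[f(\bar X_t)\ge \tfrac12\right]\ \ge\ \frac18 f(p)\qquad\text{for all } p\in[0,1]^n.$$
   Context: For $p\in[0,1]^n$, let $X_1,X_2,\dots$ be i.i.d. random vectors in $\{0,1\}^n$ whose coordinates $X_{s,i}$ are independent Bernoulli($p_i$) variables, and let $\bar X_t=(X_1+\dots+X_t)/t\in[0,1]^n$; $\mathbb{P}_p$ denotes probability under this law. For a partition $[n]=A\sqcup S\sqcup B$, the open face is $F_{A,S,B}=\{p\in[0,1]^n: p_i=0\ (i\in A),\ 0<p_i<1\ (i\in S),\ p_i=1\ (i\in B)\}$. For $T\subseteq[n]$, $p^T=\prod_{i\in T}p_i$, $(1-p)^T=\prod_{i\in T}(1-p_i)$. A function $f:[0,1]^n\to[0,1]$ is polynomially bounded if there exist an integer $m\ge0$ and a real $c>0$ such that for every open face $F_{A,S,B}$ on which $f$ is not identically $0$, $f(p)\ge c\left((1-p)^A p^S(1-p)^S p^B\right)^m$ for all $p\in[0,1]^n$. *)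

theory Defs
  imports "HOL-Analysis.Analysis" "HOL-Probability.Probability"
begin

definition unit_cube :: "(real ^ 'n) set" where
  "unit_cube = {p. \<forall>i. 0 \<le> p $ i \<and> p $ i \<le> 1}"

definition bern_vec :: "real ^ 'n \<Rightarrow> ('n \<Rightarrow> bool) pmf" where
  "bern_vec p = Pi_pmf UNIV False (\<lambda>i. bernoulli_pmf (p $ i))"

text \<open>Joint law of X_1,...,X_t (indexed 0..t-1), i.i.d. with law bern_vec p.\<close>
definition sample_pmf :: "nat \<Rightarrow> real ^ 'n \<Rightarrow> (nat \<Rightarrow> 'n \<Rightarrow> bool) pmf" where
  "sample_pmf t p = Pi_pmf {..<t} (\<lambda>_. False) (\<lambda>_. bern_vec p)"

definition emp_mean :: "nat \<Rightarrow> (nat \<Rightarrow> 'n \<Rightarrow> bool) \<Rightarrow> real ^ 'n" where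
  "emp_mean t X = (\<chi> i. (\<Sum>s<t. of_bool (X s i)) / real t)"

definition is_partition3 :: "'n set \<Rightarrow> 'n set \<Rightarrow> 'n set \<Rightarrow> bool" where
  "is_partition3 A S B \<longleftrightarrow> A \<inter> S = {} \<and> A \<inter> B = {} \<and> S \<inter> B = {} \<and> A \<union> S \<union> B = UNIV"

definition open_face :: "'n set \<Rightarrow> 'n set \<Rightarrow> 'n set \<Rightarrow> (real ^ 'n) set" where
  "open_face A S B = {p. (\<forall>i\<in>A. p $ i = 0) \<and> (\<forall>i\<in>S. 0 < p $ i \<and> p $ i < 1) \<and> (\<forall>i\<in>B. p $ i = 1)}"

definition poly_bounded :: "(real ^ 'n \<Rightarrow> real) \<Rightarrow> bool" where
  "poly_bounded f \<longleftrightarrow> (\<exists>(m::nat) (c::real). c > 0 \<and>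
     (\<forall>A S B. is_partition3 A S B \<longrightarrow> (\<exists>q\<in>open_face A S B. f q \<noteq> 0) \<longrightarrow>
        (\<forall>p\<in>unit_cube. f p \<ge> c * ((\<Prod>i\<in>A. 1 - p $ i) * (\<Prod>i\<in>S. p $ i) *
                                        (\<Prod>i\<in>S. 1 - p $ i) * (\<Prod>i\<in>B. p $ i)) ^ m)))"

end

theory Submission
  imports Defs
begin



definition coins :: "nat \<Rightarrow> real \<Rightarrow> (nat \<Rightarrow> bool) pmf" where
  "coins t q = Pi_pmf {..<t} False (\<lambda>_. bernoulli_pmf q)"

definition cnt :: "nat \<Rightarrow> (nat \<Rightarrow> bool) \<Rightarrow> nat" where
  "cnt t y = card {s\<in>{..<t}. y s}"

lemma pattern_prob:
  assumes "U \<subseteq> {..<t}" "V \<subseteq> {..<t}" "U \<inter> V = {}" "0 \<le> q" "q \<le> 1"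
  shows "measure_pmf.prob (coins t q) {y. (\<forall>s\<in>U. y s) \<and> (\<forall>s\<in>V. \<not> y s)}
           = q ^ card U * (1 - q) ^ card V"
proof -
  define B where "B s = (if s \<in> U then {True} else if s \<in> V then {False} else UNIV)" for s
  have eq: "{y. (\<forall>s\<in>U. y s) \<and> (\<forall>s\<in>V. \<not> y s)} = Pi {..<t} B"
    using assms(1-3) by (auto simp: B_def Pi_def)
  have "measure_pmf.prob (coins t q) (Pi {..<t} B) = (\<Prod>s\<in>{..<t}. measure_pmf.prob (bernoulli_pmf q) (B s))"
    unfolding coins_def by (rule measure_Pi_pmf_Pi) simp
  also have "\<dots> = (\<Prod>s\<in>{..<t}. if s \<in> U then q else if s \<in> V then 1 - q else 1)"
    using assms(4,5) by (intro prod.cong) (auto simp: B_def measure_pmf_single)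
  also have "\<dots> = (\<Prod>s\<in>{..<t} \<inter> {s. s \<in> U}. q) * (\<Prod>s\<in>{..<t} \<inter> - {s. s \<in> U}. if s \<in> V then 1 - q else 1)"
    by (rule prod.If_cases) simp
  also have "(\<Prod>s\<in>{..<t} \<inter> - {s. s \<in> U}. if s \<in> V then 1 - q else 1) =
      (\<Prod>s\<in>({..<t} \<inter> - {s. s \<in> U}) \<inter> {s. s \<in> V}. 1 - q) * (\<Prod>s\<in>({..<t} \<inter> - {s. s \<in> U}) \<inter> - {s. s \<in> V}. 1)"
    by (rule prod.If_cases) simp
  also have "({..<t} \<inter> {s. s \<in> U}) = U" using assms by auto
  also have "({..<t} \<inter> - {s. s \<in> U}) \<inter> {s. s \<in> V} = V" using assms by auto
  finally show ?thesis using eq by simp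
qed

lemma count_tail:
  assumes "0 \<le> q" "q \<le> 1"
  shows "measure_pmf.prob (coins t q) {y. a \<le> cnt t y \<and> b \<le> t - cnt t y}
           \<le> real (t choose a) * real (t choose b) * q ^ a * (1 - q) ^ b"
proof -
  define Ua where "Ua = {U. U \<subseteq> {..<t} \<and> card U = a}"
  define Ub where "Ub = {U. U \<subseteq> {..<t} \<and> card U = b}"
  define I where "I = {(U,V). U \<in> Ua \<and> V \<in> Ub \<and> U \<inter> V = {}}"
  define pat where "pat = (\<lambda>(U,V). {y. (\<forall>s\<in>U. y s) \<and> (\<forall>s\<in>(V::nat set). \<not> y s)})"
  have finUa: "finite Ua" unfolding Ua_def by (rule finite_subset[of _ "Pow {..<t}"]) auto
  have finUb: "finite Ub" unfolding Ub_def by (rule finite_subset[of _ "Pow {..<t}"]) auto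
  have finI: "finite I" unfolding I_def
    by (rule finite_subset[OF _ finite_cartesian_product[OF finUa finUb]]) auto
  have cardI: "card I \<le> (t choose a) * (t choose b)"
  proof -
    have "card I \<le> card (Ua \<times> Ub)"
      by (rule card_mono) (auto simp: I_def intro: finite_cartesian_product finUa finUb)
    also have "\<dots> = (t choose a) * (t choose b)"
      by (simp add: card_cartesian_product Ua_def Ub_def n_subsets)
    finally show ?thesis .
  qed
  have sub: "{y. a \<le> cnt t y \<and> b \<le> t - cnt t y} \<subseteq> (\<Union>i\<in>I. pat i)"
  proof
    fix y assume "y \<in> {y. a \<le> cnt t y \<and> b \<le> t - cnt t y}"
    hence h1: "a \<le> card {s\<in>{..<t}. y s}" and h2: "b \<le> t - card {s\<in>{..<t}. y s}"
      by (auto simp: cnt_def)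
    have "card ({..<t} - {s\<in>{..<t}. y s}) = t - card {s\<in>{..<t}. y s}"
      by (subst card_Diff_subset) auto
    moreover have "{..<t} - {s\<in>{..<t}. y s} = {s\<in>{..<t}. \<not> y s}" by auto
    ultimately have h3: "b \<le> card {s\<in>{..<t}. \<not> y s}" using h2 by simp
    obtain U where U: "U \<subseteq> {s\<in>{..<t}. y s}" "card U = a"
      using obtain_subset_with_card_n[OF h1] by blast
    obtain V where V: "V \<subseteq> {s\<in>{..<t}. \<not> y s}" "card V = b"
      using obtain_subset_with_card_n[OF h3] by blast
    have "(U,V) \<in> I" using U V by (auto simp: I_def Ua_def Ub_def)
    moreover have "y \<in> pat (U,V)" using U V by (auto simp: pat_def)
    ultimately show "y \<in> (\<Union>i\<in>I. pat i)" by blast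
  qed
  have "measure_pmf.prob (coins t q) {y. a \<le> cnt t y \<and> b \<le> t - cnt t y}
        \<le> measure_pmf.prob (coins t q) (\<Union>i\<in>I. pat i)"
    by (rule measure_pmf.finite_measure_mono[OF sub]) simp
  also have "\<dots> \<le> (\<Sum>i\<in>I. measure_pmf.prob (coins t q) (pat i))"
    by (rule measure_pmf.finite_measure_subadditive_finite[OF finI]) simp
  also have "\<dots> = (\<Sum>i\<in>I. q ^ a * (1 - q) ^ b)"
    by (intro sum.cong refl) (auto simp: I_def pat_def Ua_def Ub_def pattern_prob assms)
  also have "\<dots> = real (card I) * (q ^ a * (1 - q) ^ b)" by simp
  also have "\<dots> \<le> real ((t choose a) * (t choose b)) * (q ^ a * (1 - q) ^ b)"
    by (intro mult_right_mono) (use cardI assms in \<open>auto simp del: of_nat_mult\<close>)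
  finally show ?thesis by (simp add: mult_ac)
qed

lemma hoeff:
  assumes "0 \<le> q" "q \<le> 1" "t > 0" "\<eta> \<ge> 0"
  shows "measure_pmf.prob (coins t q) {y. \<bar>real (cnt t y) / t - q\<bar> \<ge> \<eta>} \<le> 2 * exp (-2 * real t * \<eta>\<^sup>2)"
proof -
  interpret binomial_distribution t q using assms by unfold_locales auto
  have "binomial_pmf t q = map_pmf (\<lambda>f. card {x\<in>{..<t}. f x}) (coins t q)"
    unfolding coins_def by (rule binomial_pmf_altdef') (use assms in auto)
  hence "measure_pmf.prob (binomial_pmf t q) {x. \<bar>real x / t - q\<bar> \<ge> \<eta>}
       = measure_pmf.prob (coins t q) {y. \<bar>real (cnt t y) / t - q\<bar> \<ge> \<eta>}"
    by (simp add: cnt_def)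
  moreover have "measure_pmf.prob (binomial_pmf t q) {x. \<bar>real x / t - q\<bar> \<ge> \<eta>} \<le> 2 * exp (-2 * real t * \<eta>\<^sup>2)"
    using prob_abs_ge'[of \<eta>] assms by simp
  ultimately show ?thesis by simp
qed




definition tr :: "(nat \<Rightarrow> 'n \<Rightarrow> bool) \<Rightarrow> ('n \<Rightarrow> nat \<Rightarrow> bool)" where
  "tr X = (\<lambda>i s. X s i)"

definition Qpmf :: "nat \<Rightarrow> real ^ 'n \<Rightarrow> ('n \<Rightarrow> nat \<Rightarrow> bool) pmf" where
  "Qpmf t p = Pi_pmf UNIV (\<lambda>_. False) (\<lambda>i. coins t (p $ i))"

lemma map_tr_sample: "map_pmf tr (sample_pmf t (p :: real ^ 'n)) = Qpmf t p"
proof (rule pmf_eqI)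
  fix Y :: "'n \<Rightarrow> nat \<Rightarrow> bool"
  have inj: "inj (tr :: (nat \<Rightarrow> 'n \<Rightarrow> bool) \<Rightarrow> _)"
    by (rule injI) (auto simp: tr_def fun_eq_iff)
  have Y: "Y = tr (\<lambda>s i. Y i s)" by (simp add: tr_def)
  have "pmf (map_pmf tr (sample_pmf t p)) Y = pmf (sample_pmf t p) (\<lambda>s i. Y i s)"
    by (subst Y, subst pmf_map_inj'[OF inj]) simp
  also have "\<dots> = (if (\<forall>s. s \<notin> {..<t} \<longrightarrow> (\<lambda>i. Y i s) = (\<lambda>_. False))
        then \<Prod>s\<in>{..<t}. \<Prod>i\<in>UNIV. pmf (bernoulli_pmf (p $ i)) (Y i s) else 0)"
    unfolding sample_pmf_def bern_vec_def by (auto simp: pmf_Pi)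
  also have "\<dots> = (\<Prod>i\<in>UNIV. if (\<forall>s. s \<notin> {..<t} \<longrightarrow> Y i s = False)
        then \<Prod>s\<in>{..<t}. pmf (bernoulli_pmf (p $ i)) (Y i s) else 0)"
  proof (cases "\<forall>s. s \<notin> {..<t} \<longrightarrow> (\<lambda>i. Y i s) = (\<lambda>_. False)")
    case True
    hence "\<forall>i. \<forall>s. s \<notin> {..<t} \<longrightarrow> Y i s = False" by (metis)
    then show ?thesis using True by (simp add: prod.swap[of _ "{..<t}"])
  next
    case False
    then obtain s i where "s \<notin> {..<t}" "Y i s" by (auto simp: fun_eq_iff)
    have z: "(\<Prod>i\<in>UNIV. if (\<forall>s. s \<notin> {..<t} \<longrightarrow> Y i s = False)
        then \<Prod>s\<in>{..<t}. pmf (bernoulli_pmf (p $ i)) (Y i s) else 0) = 0"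
      by (rule prod_zero) (use \<open>s \<notin> {..<t}\<close> \<open>Y i s\<close> in auto)
    show ?thesis unfolding if_not_P[OF False] by (simp only: z)
  qed
  also have "\<dots> = pmf (Qpmf t p) Y"
    unfolding Qpmf_def coins_def by (simp add: pmf_Pi)
  finally show "pmf (map_pmf tr (sample_pmf t p)) Y = pmf (Qpmf t p) Y" .
qed

lemma prob_sample_tr:
  "measure_pmf.prob (sample_pmf t (p :: real ^ 'n)) {X. P (tr X)} = measure_pmf.prob (Qpmf t p) {Y. P Y}"
proof -
  have "measure_pmf.prob (Qpmf t p) {Y. P Y} = measure_pmf.prob (map_pmf tr (sample_pmf t p)) {Y. P Y}"
    by (simp add: map_tr_sample)
  also have "\<dots> = measure_pmf.prob (sample_pmf t p) {X. P (tr X)}"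
    by (simp add: vimage_def)
  finally show ?thesis by simp
qed

lemma prob_Q_Pi:
  "measure_pmf.prob (Qpmf t (p :: real ^ 'n)) {Y. \<forall>i. Y i \<in> B i} = (\<Prod>i\<in>UNIV. measure_pmf.prob (coins t (p $ i)) (B i))"
proof -
  have "{Y. \<forall>i. Y i \<in> B i} = Pi UNIV B" by (auto simp: Pi_def)
  thus ?thesis unfolding Qpmf_def by (simp add: measure_Pi_pmf_Pi)
qed




lemma cnt_le: "cnt t y \<le> t"
  unfolding cnt_def by (rule order.trans[OF card_mono[of "{..<t}"]]) auto

lemma sum_bool_cnt: "(\<Sum>s<t. of_bool (y s) :: real) = real (cnt t y)"
proof -
  have "(\<Sum>s\<in>{s\<in>{..<t}. y s}. 1::real) = (\<Sum>s<t. if y s then 1 else 0)"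
    by (rule sum.inter_filter) simp
  thus ?thesis by (simp add: cnt_def of_bool_def)
qed

definition ty :: "nat \<Rightarrow> nat \<Rightarrow> (nat \<Rightarrow> bool) \<Rightarrow> nat" where
  "ty k t y = (if cnt t y < k then 0 else if t - k < cnt t y then 2 else 1)"

definition gfun :: "nat \<Rightarrow> real \<Rightarrow> real" where
  "gfun a x = (if a = 0 then 1 - x else if a = 1 then x * (1 - x) else x)"

lemma gfun_nonneg: "0 \<le> x \<Longrightarrow> x \<le> 1 \<Longrightarrow> 0 \<le> gfun a x"
  by (auto simp: gfun_def)

lemma gfun_le1: "0 \<le> x \<Longrightarrow> x \<le> 1 \<Longrightarrow> gfun a x \<le> 1"
  by (auto simp: gfun_def mult_le_one)

lemma type_bound:
  assumes "2 * k \<le> t" "0 \<le> q" "q \<le> 1" "a \<in> {0,1,2}"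
  shows "measure_pmf.prob (coins t q) {y. ty k t y = a} \<le> real (t choose k) ^ 2 * gfun a q ^ k"
proof -
  have "0 < t choose k" using assms(1) by (simp add: zero_less_binomial_iff)
  hence C1: "1 \<le> real (t choose k)" by linarith
  have q1: "0 \<le> 1 - q" using assms by simp
  consider "a = 0" | "a = 1" | "a = 2" using assms(4) by auto
  then show ?thesis
  proof cases
    case 1
    have "measure_pmf.prob (coins t q) {y. ty k t y = a} \<le> measure_pmf.prob (coins t q) {y. 0 \<le> cnt t y \<and> k \<le> t - cnt t y}"
      by (rule measure_pmf.finite_measure_mono) (use 1 assms(1) in \<open>auto simp: ty_def split: if_splits\<close>)
    also have "\<dots> \<le> real (t choose 0) * real (t choose k) * q ^ 0 * (1 - q) ^ k"
      by (rule count_tail) (use assms in auto)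
    also have "\<dots> = 1 * real (t choose k) * (1 - q) ^ k" by simp
    also have "\<dots> \<le> real (t choose k) * real (t choose k) * (1 - q) ^ k"
      by (intro mult_right_mono zero_le_power q1) (use C1 in auto)
    finally show ?thesis using 1 by (simp add: gfun_def power2_eq_square)
  next
    case 3
    have "measure_pmf.prob (coins t q) {y. ty k t y = a} \<le> measure_pmf.prob (coins t q) {y. k \<le> cnt t y \<and> 0 \<le> t - cnt t y}"
      by (rule measure_pmf.finite_measure_mono) (use 3 assms(1) in \<open>auto simp: ty_def split: if_splits\<close>)
    also have "\<dots> \<le> real (t choose k) * real (t choose 0) * q ^ k * (1 - q) ^ 0"
      by (rule count_tail) (use assms in auto)
    also have "\<dots> = 1 * real (t choose k) * q ^ k" by simp
    also have "\<dots> \<le> real (t choose k) * real (t choose k) * q ^ k"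
      by (intro mult_right_mono zero_le_power assms(2)) (use C1 in auto)
    finally show ?thesis using 3 by (simp add: gfun_def power2_eq_square)
  next
    case 2
    have "measure_pmf.prob (coins t q) {y. ty k t y = a} \<le> measure_pmf.prob (coins t q) {y. k \<le> cnt t y \<and> k \<le> t - cnt t y}"
      by (rule measure_pmf.finite_measure_mono) (use 2 assms(1) cnt_le in \<open>auto simp: ty_def split: if_splits\<close>)
    also have "\<dots> \<le> real (t choose k) * real (t choose k) * q ^ k * (1 - q) ^ k"
      by (rule count_tail) (use assms in auto)
    finally show ?thesis using 2 by (simp add: gfun_def power2_eq_square power_mult_distrib mult_ac)
  qed
qed

lemma le_sqrt_mult:
  fixes P a b :: real
  assumes "0 \<le> P" "P \<le> a" "P \<le> b"
  shows "P \<le> sqrt a * sqrt b"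
proof -
  have "P = sqrt P * sqrt P" using assms by simp
  also have "\<dots> \<le> sqrt a * sqrt b"
    by (intro mult_mono real_sqrt_le_mono) (use assms in auto)
  finally show ?thesis .
qed

lemma dev_bound:
  assumes "2 * (2 * m) \<le> t" "0 \<le> q" "q \<le> 1" "a \<in> {0,1,2}" "t > 0" "\<eta> \<ge> 0"
  shows "measure_pmf.prob (coins t q) {y. ty (2*m) t y = a \<and> \<bar>real (cnt t y) / t - q\<bar> \<ge> \<eta>}
     \<le> real (t choose (2*m)) * gfun a q ^ m * sqrt (2 * exp (-2 * real t * \<eta>\<^sup>2))"
proof -
  let ?P = "measure_pmf.prob (coins t q) {y. ty (2*m) t y = a \<and> \<bar>real (cnt t y) / t - q\<bar> \<ge> \<eta>}"
  have "?P \<le> measure_pmf.prob (coins t q) {y. ty (2*m) t y = a}"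
    by (rule measure_pmf.finite_measure_mono) auto
  also have "\<dots> \<le> real (t choose (2*m)) ^ 2 * gfun a q ^ (2*m)"
    by (rule type_bound) (use assms in auto)
  finally have h1: "?P \<le> real (t choose (2*m)) ^ 2 * gfun a q ^ (2*m)" .
  have "?P \<le> measure_pmf.prob (coins t q) {y. \<bar>real (cnt t y) / t - q\<bar> \<ge> \<eta>}"
    by (rule measure_pmf.finite_measure_mono) auto
  also have "\<dots> \<le> 2 * exp (-2 * real t * \<eta>\<^sup>2)" by (rule hoeff) (use assms in auto)
  finally have h2: "?P \<le> 2 * exp (-2 * real t * \<eta>\<^sup>2)" .
  have "?P \<le> sqrt (real (t choose (2*m)) ^ 2 * gfun a q ^ (2*m)) * sqrt (2 * exp (-2 * real t * \<eta>\<^sup>2))"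
    by (rule le_sqrt_mult[OF _ h1 h2]) simp
  also have "sqrt (real (t choose (2*m)) ^ 2 * gfun a q ^ (2*m)) = real (t choose (2*m)) * gfun a q ^ m"
  proof -
    have "real (t choose (2*m)) ^ 2 * gfun a q ^ (2*m) = (real (t choose (2*m)) * gfun a q ^ m)\<^sup>2"
      by (simp add: power_mult_distrib power_mult[symmetric] mult.commute)
    moreover have "0 \<le> real (t choose (2*m)) * gfun a q ^ m"
      using gfun_nonneg[OF assms(2,3)] by simp
    ultimately show ?thesis by simp
  qed
  finally show ?thesis .
qed

lemma dist_le_card:
  fixes a b :: "real ^ 'n"
  assumes "\<And>i. \<bar>a $ i - b $ i\<bar> \<le> \<delta>"
  shows "dist a b \<le> real CARD('n) * \<delta>"
proof -
  have "dist a b = norm (a - b)" by (simp add: dist_norm)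
  also have "\<dots> \<le> (\<Sum>i\<in>UNIV. \<bar>(a - b) $ i\<bar>)" by (rule norm_le_l1_cart)
  also have "\<dots> \<le> (\<Sum>i\<in>(UNIV::'n set). \<delta>)" by (intro sum_mono) (use assms in simp)
  finally show ?thesis by simp
qed

lemma prod_face:
  fixes x :: "real ^ 'n"
  shows "(\<Prod>i\<in>UNIV. gfun (\<phi> i) (x $ i)) = (\<Prod>i\<in>{i. \<phi> i = 0}. 1 - x $ i) * (\<Prod>i\<in>{i. \<phi> i = 1}. x $ i) *
     (\<Prod>i\<in>{i. \<phi> i = 1}. 1 - x $ i) * (\<Prod>i\<in>{i. \<phi> i \<noteq> 0 \<and> \<phi> i \<noteq> 1}. x $ i)"
proof -
  have e: "\<And>P h. (\<Prod>i\<in>{i. P i}. h i) = (\<Prod>i\<in>(UNIV::'n set). if P i then h i else (1::real))"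
    using prod.inter_filter[of "UNIV::'n set"] by simp
  show ?thesis unfolding e prod.distrib[symmetric]
    by (intro prod.cong refl) (auto simp: gfun_def)
qed

lemma asymp:
  assumes "\<eta> > 0"
  shows "((\<lambda>t::real. t ^ N * exp (- t * \<eta>\<^sup>2)) \<longlongrightarrow> 0) at_top"
proof -
  have 1: "((\<lambda>x::real. x ^ N / exp x) \<longlongrightarrow> 0) at_top" by (rule tendsto_power_div_exp_0)
  have 2: "filterlim (\<lambda>t::real. \<eta>\<^sup>2 * t) at_top at_top"
    by (rule filterlim_tendsto_pos_mult_at_top[OF tendsto_const]) (use assms in \<open>auto simp: filterlim_ident\<close>)
  have 3: "((\<lambda>t. (\<eta>\<^sup>2 * t) ^ N / exp (\<eta>\<^sup>2 * t)) \<longlongrightarrow> 0) at_top"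
    by (rule filterlim_compose[OF 1 2])
  have 4: "((\<lambda>t. (1 / \<eta>\<^sup>2) ^ N * ((\<eta>\<^sup>2 * t) ^ N / exp (\<eta>\<^sup>2 * t))) \<longlongrightarrow> (1 / \<eta>\<^sup>2) ^ N * 0) at_top"
    by (rule tendsto_mult_left[OF 3])
  have e: "(1 / \<eta>\<^sup>2) ^ N * ((\<eta>\<^sup>2 * t) ^ N / exp (\<eta>\<^sup>2 * t)) = t ^ N * exp (- t * \<eta>\<^sup>2)" for t
    using assms by (simp add: power_mult_distrib exp_minus field_simps power_divide)
  show ?thesis using 4 unfolding e by simp
qed




definition FP :: "'n set \<Rightarrow> 'n set \<Rightarrow> 'n set \<Rightarrow> real ^ 'n \<Rightarrow> real" where
  "FP A S B p = (\<Prod>i\<in>A. 1 - p $ i) * (\<Prod>i\<in>S. p $ i) * (\<Prod>i\<in>S. 1 - p $ i) * (\<Prod>i\<in>B. p $ i)"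

lemma FP_bounds:
  fixes p :: "real ^ 'n" and A S B :: "'n set"
  assumes "p \<in> unit_cube"
  shows "0 \<le> FP A S B p" "FP A S B p \<le> 1"
proof -
  have h: "\<And>i. 0 \<le> p $ i \<and> p $ i \<le> 1" using assms by (auto simp: unit_cube_def)
  show "0 \<le> FP A S B p" unfolding FP_def using h
    by (intro mult_nonneg_nonneg prod_nonneg) auto
  show "FP A S B p \<le> 1" unfolding FP_def using h
    by (intro mult_le_one prod_le_1 prod_nonneg mult_nonneg_nonneg conjI) auto
qed

lemma poly_bounded_m1:
  fixes f :: "real ^ 'n \<Rightarrow> real"
  assumes "poly_bounded f"
  obtains m c where "m \<ge> 1" "c > 0"
    "\<And>A S B (p :: real ^ 'n). is_partition3 A S B \<Longrightarrow> (\<exists>q\<in>open_face A S B. f q \<noteq> 0) \<Longrightarrow> p \<in> unit_cube \<Longrightarrow>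
        f p \<ge> c * FP A S B p ^ m"
proof -
  from assms obtain m0 c where c: "c > 0" and H: "\<forall>A S B. is_partition3 A S B \<longrightarrow> (\<exists>q\<in>open_face A S B. f q \<noteq> 0) \<longrightarrow>
        (\<forall>p\<in>unit_cube. f p \<ge> c * ((\<Prod>i\<in>A. 1 - p $ i) * (\<Prod>i\<in>S. p $ i) *
                                        (\<Prod>i\<in>S. 1 - p $ i) * (\<Prod>i\<in>B. p $ i)) ^ m0)"
    unfolding poly_bounded_def by blast
  show ?thesis
  proof (rule that[of "m0 + 1" c])
    fix A S B and p :: "real ^ 'n" assume a: "is_partition3 A S B" "\<exists>q\<in>open_face A S B. f q \<noteq> 0" "p \<in> unit_cube"
    have "c * FP A S B p ^ (m0 + 1) \<le> c * FP A S B p ^ m0"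
      using FP_bounds[OF a(3)] c by (intro mult_left_mono power_decreasing) auto
    also have "\<dots> \<le> f p" using H a unfolding FP_def by blast
    finally show "c * FP A S B p ^ (m0 + 1) \<le> f p" .
  qed (use c in auto)
qed

definition qv :: "nat \<Rightarrow> ('n \<Rightarrow> nat \<Rightarrow> bool) \<Rightarrow> real ^ 'n" where
  "qv t Y = (\<chi> i. real (cnt t (Y i)) / real t)"

lemma emp_mean_qv: "emp_mean t X = qv t (tr X)"
  by (simp add: emp_mean_def qv_def tr_def sum_bool_cnt vec_eq_iff)

lemma qv_cube: "qv t Y \<in> unit_cube"
  using cnt_le by (auto simp: unit_cube_def qv_def divide_le_eq_1)

lemma unit_cube_cbox: "unit_cube = cbox (0::real^'n) 1"
  by (auto simp: unit_cube_def mem_box_cart)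

lemma eventually_t0:
  assumes "\<eta> > 0" and that: "L > 0" "K \<ge> 0"
  shows "eventually (\<lambda>t::nat. K * real (t choose k) ^ N * sqrt (2 * exp (-2 * real t * \<eta>\<^sup>2)) < L) sequentially"
proof -
  have lim: "((\<lambda>t::nat. real t ^ (k * N) * exp (- real t * \<eta>\<^sup>2)) \<longlongrightarrow> 0) sequentially"
    by (rule filterlim_compose[OF asymp[OF \<open>\<eta> > 0\<close>] filterlim_real_sequentially])
  have lim2: "((\<lambda>t::nat. 2 * K * (real t ^ (k * N) * exp (- real t * \<eta>\<^sup>2))) \<longlongrightarrow> 2 * K * 0) sequentially"
    by (rule tendsto_mult_left[OF lim])
  have ev: "eventually (\<lambda>t::nat. 2 * K * (real t ^ (k * N) * exp (- real t * \<eta>\<^sup>2)) < L) sequentially"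
    using order_tendstoD(2)[OF lim2] that by simp
  have ev2: "eventually (\<lambda>t::nat. t \<ge> k) sequentially" by (rule eventually_ge_at_top)
  show ?thesis
  proof (rule eventually_mono[OF eventually_conj[OF ev ev2]])
    fix t :: nat assume a: "2 * K * (real t ^ (k * N) * exp (- real t * \<eta>\<^sup>2)) < L \<and> k \<le> t"
    have s: "sqrt (2 * exp (-2 * real t * \<eta>\<^sup>2)) \<le> 2 * exp (- real t * \<eta>\<^sup>2)"
    proof (rule real_le_lsqrt)
      have "exp (-2 * real t * \<eta>\<^sup>2) = exp (- real t * \<eta>\<^sup>2) ^ 2"
        by (simp add: exp_double[symmetric] power2_eq_square exp_add[symmetric])
      thus "2 * exp (-2 * real t * \<eta>\<^sup>2) \<le> (2 * exp (- real t * \<eta>\<^sup>2))\<^sup>2"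
        by (simp add: power_mult_distrib)
    qed auto
    have b: "real (t choose k) ^ N \<le> real t ^ (k * N)"
    proof -
      have "real (t choose k) \<le> real t ^ k"
        using binomial_le_pow[of k t] a by (simp flip: of_nat_power)
      hence "real (t choose k) ^ N \<le> (real t ^ k) ^ N" by (intro power_mono) auto
      thus ?thesis by (simp add: power_mult)
    qed
    have "K * real (t choose k) ^ N * sqrt (2 * exp (-2 * real t * \<eta>\<^sup>2))
         \<le> K * real t ^ (k * N) * (2 * exp (- real t * \<eta>\<^sup>2))"
      by (intro mult_mono mult_left_mono b s) (use that in auto)
    also have "\<dots> = 2 * K * (real t ^ (k * N) * exp (- real t * \<eta>\<^sup>2))" by simp
    finally show "K * real (t choose k) ^ N * sqrt (2 * exp (-2 * real t * \<eta>\<^sup>2)) < L" using a by linarith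
  qed
qed




theorem lemma5:
  fixes f :: "real ^ 'n \<Rightarrow> real"
  assumes cont: "continuous_on unit_cube f"
    and range: "\<forall>p\<in>unit_cube. 0 \<le> f p \<and> f p \<le> 1"
    and pb: "poly_bounded f"
  shows "\<exists>t0::nat. \<forall>t\<ge>t0. \<forall>p\<in>unit_cube.
           f p - (1/4) * measure_pmf.prob (sample_pmf t p) {X. f (emp_mean t X) \<ge> 1/2}
             \<ge> (1/8) * f p"
proof -
  define n where "n = CARD('n)"
  have n1: "n \<ge> 1" unfolding n_def using card_ge_0_finite[of "UNIV::'n set"] by simp
  obtain m c where m1: "m \<ge> 1" and c: "c > 0" and PB:
    "\<And>A S B (p :: real ^ 'n). is_partition3 A S B \<Longrightarrow> (\<exists>q\<in>open_face A S B. f q \<noteq> 0) \<Longrightarrow> p \<in> unit_cube \<Longrightarrow>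
        f p \<ge> c * FP A S B p ^ m"
    using poly_bounded_m1[OF pb] by blast
  define k where "k = 2 * m"
  have "compact (unit_cube :: (real ^ 'n) set)" unfolding unit_cube_cbox by (rule compact_cbox)
  hence uc: "uniformly_continuous_on unit_cube f" using cont compact_uniformly_continuous by blast
  obtain d1 where d1: "d1 > 0" and D1: "\<And>x y. x \<in> unit_cube \<Longrightarrow> y \<in> unit_cube \<Longrightarrow> dist y x < d1 \<Longrightarrow> dist (f y) (f x) < 3/14"
    using uc unfolding uniformly_continuous_on_def by (metis divide_pos_pos zero_less_numeral)
  obtain d2 where d2: "d2 > 0" and D2: "\<And>x y. x \<in> unit_cube \<Longrightarrow> y \<in> unit_cube \<Longrightarrow> dist y x < d2 \<Longrightarrow> dist (f y) (f x) < 1/2"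
    using uc unfolding uniformly_continuous_on_def by (metis divide_pos_pos zero_less_numeral zero_less_one)
  define \<eta> where "\<eta> = d1 / (2 * real n)"
  have \<eta>: "\<eta> > 0" using d1 n1 by (simp add: \<eta>_def)
  have n\<eta>: "real n * \<eta> < d1" using d1 n1 by (simp add: \<eta>_def)
  define \<Phi> where "\<Phi> = {\<phi>::'n \<Rightarrow> nat. \<forall>i. \<phi> i \<in> {0,1,2}}"
  have \<Phi>eq: "\<Phi> = PiE UNIV (\<lambda>_. {0,1,2})" by (auto simp: \<Phi>_def PiE_def extensional_def Pi_def)
  have fin\<Phi>: "finite \<Phi>" unfolding \<Phi>eq by (rule finite_PiE) auto
  define K where "K = real (card \<Phi>) * real n / c"
  have K0: "K \<ge> 0" using c by (simp add: K_def)
  have ev1: "eventually (\<lambda>t::nat. K * real (t choose k) ^ (2 * n) * sqrt (2 * exp (-2 * real t * \<eta>\<^sup>2)) < 7/2) sequentially"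
    by (rule eventually_t0[OF \<eta> _ K0]) simp
  have ev2: "eventually (\<lambda>t::nat. t \<ge> 2 * k + 1 + nat \<lceil>real n * real k / d2\<rceil>) sequentially"
    by (rule eventually_ge_at_top)
  obtain t0 where T0: "\<And>t. t \<ge> t0 \<Longrightarrow> K * real (t choose k) ^ (2 * n) * sqrt (2 * exp (-2 * real t * \<eta>\<^sup>2)) < 7/2
      \<and> t \<ge> 2 * k + 1 + nat \<lceil>real n * real k / d2\<rceil>"
    using eventually_conj[OF ev1 ev2] unfolding eventually_sequentially by blast
  show ?thesis
  proof (intro exI[of _ t0] allI impI ballI)
    fix t :: nat and p :: "real ^ 'n"
    assume t: "t \<ge> t0" and p: "p \<in> unit_cube"
    have Kt: "K * real (t choose k) ^ (2 * n) * sqrt (2 * exp (-2 * real t * \<eta>\<^sup>2)) < 7/2" using T0[OF t] by blast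
    have tbig: "t \<ge> 2 * k + 1 + nat \<lceil>real n * real k / d2\<rceil>" using T0[OF t] by blast
    have t2k: "2 * k \<le> t" and tpos: "t > 0" using tbig by auto
    have tk: "real n * real k / real t < d2"
    proof -
      have "real n * real k / d2 < real t" using tbig by linarith
      thus ?thesis using d2 tpos by (simp add: field_simps)
    qed
    have pi: "\<And>i. 0 \<le> p $ i \<and> p $ i \<le> 1" using p by (auto simp: unit_cube_def)
    define E where "E = {Y :: 'n \<Rightarrow> nat \<Rightarrow> bool. 1/2 \<le> f (qv t Y)}"
    define P where "P = measure_pmf.prob (sample_pmf t p) {X. f (emp_mean t X) \<ge> 1/2}"
    have PE: "P = measure_pmf.prob (Qpmf t p) E"
      unfolding P_def E_def emp_mean_qv by (rule prob_sample_tr)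
    have main: "P \<le> 7/2 * f p"
    proof (cases "f p \<ge> 2/7")
      case True
      have "P \<le> 1" unfolding P_def by (rule measure_pmf.prob_le_1)
      thus ?thesis using True by linarith
    next
      case False
      define C where "C = real (t choose k)"
      define Dq where "Dq = sqrt (2 * exp (-2 * real t * \<eta>\<^sup>2))"
      have "0 < t choose k" using t2k by (simp add: zero_less_binomial_iff)
      hence C1: "1 \<le> C" unfolding C_def by linarith
      have Dq0: "0 \<le> Dq" unfolding Dq_def by simp
      define G where "G = {\<phi>\<in>\<Phi>. \<exists>Y\<in>E. \<forall>i. ty k t (Y i) = \<phi> i}"
      define Bs where "Bs = (\<lambda>\<phi> j i. {y. ty k t y = \<phi> i \<and> (i = j \<longrightarrow> \<eta> \<le> \<bar>real (cnt t y) / t - p $ i\<bar>)})"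
      define S where "S = (\<lambda>(\<phi>, j). {Y. \<forall>i. Y i \<in> Bs \<phi> j i})"
      have finG: "finite (G \<times> (UNIV :: 'n set))" using fin\<Phi> by (auto simp: G_def)
      have cardG: "card (G \<times> (UNIV :: 'n set)) \<le> card \<Phi> * n"
        unfolding card_cartesian_product n_def
        by (intro mult_right_mono card_mono fin\<Phi>) (auto simp: G_def)
      have good: "f p \<ge> c * (\<Prod>i\<in>UNIV. gfun (\<phi> i) (p $ i)) ^ m" if "\<phi> \<in> G" for \<phi>
      proof -
        from that obtain Y where Y: "Y \<in> E" "\<And>i. ty k t (Y i) = \<phi> i" and \<phi>\<Phi>: "\<phi> \<in> \<Phi>"
          unfolding G_def by blast
        define q where "q = qv t Y"
        define q' where "q' = (\<chi> i. if \<phi> i = 0 then 0 else if \<phi> i = 1 then q $ i else (1::real))"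
        have q: "q \<in> unit_cube" unfolding q_def by (rule qv_cube)
        have fq: "1/2 \<le> f q" using Y(1) by (simp add: E_def q_def)
        have q': "q' \<in> unit_cube" using q by (auto simp: unit_cube_def q'_def)
        have close: "\<bar>q' $ i - q $ i\<bar> \<le> real k / real t" for i
        proof -
          have cl: "cnt t (Y i) \<le> t" by (rule cnt_le)
          consider "cnt t (Y i) < k" "\<phi> i = 0" | "\<not> cnt t (Y i) < k" "t - k < cnt t (Y i)" "\<phi> i = 2"
            | "\<phi> i = 1"
            using Y(2)[of i] by (auto simp: ty_def split: if_splits)
          then show ?thesis
          proof cases
            case 1
            then show ?thesis using tpos by (simp add: q'_def q_def qv_def divide_right_mono)
          next
            case 2
            have "real t - real k < real (cnt t (Y i))" using 2 t2k by linarith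
            have "1 - real (cnt t (Y i)) / real t = (real t - real (cnt t (Y i))) / real t"
              using tpos by (simp add: field_simps)
            also have "\<dots> \<le> real k / real t"
              by (rule divide_right_mono) (use \<open>real t - real k < real (cnt t (Y i))\<close> in auto)
            finally have "1 - real (cnt t (Y i)) / real t \<le> real k / real t" .
            moreover have "real (cnt t (Y i)) / real t \<le> 1" using cl tpos by simp
            ultimately show ?thesis using 2 by (simp add: q'_def q_def qv_def)
          next
            case 3
            then show ?thesis using tpos by (simp add: q'_def)
          qed
        qed
        have "dist q' q \<le> real n * (real k / real t)" unfolding n_def by (rule dist_le_card[OF close])
        hence "dist q' q < d2" using tk by simp
        hence "dist (f q') (f q) < 1/2" using D2[OF q q'] by simp
        hence fq': "f q' \<noteq> 0" using fq by (auto simp: dist_real_def)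
        define A where "A = {i. \<phi> i = 0}"
        define S' where "S' = {i. \<phi> i = 1}"
        define B where "B = {i. \<phi> i \<noteq> 0 \<and> \<phi> i \<noteq> 1}"
        have part: "is_partition3 A S' B" by (auto simp: is_partition3_def A_def S'_def B_def)
        have face: "q' \<in> open_face A S' B"
        proof -
          have "0 < q $ i \<and> q $ i < 1" if "\<phi> i = 1" for i
          proof -
            have "ty k t (Y i) = 1" using Y(2) that by simp
            hence "k \<le> cnt t (Y i)" "cnt t (Y i) \<le> t - k" by (auto simp: ty_def split: if_splits)
            hence "0 < cnt t (Y i)" "cnt t (Y i) < t" using m1 t2k by (auto simp: k_def)
            thus ?thesis using tpos by (simp add: q_def qv_def)
          qed
          thus ?thesis by (auto simp: open_face_def A_def S'_def B_def q'_def)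
        qed
        have "f p \<ge> c * FP A S' B p ^ m" by (rule PB[OF part _ p]) (use face fq' in blast)
        moreover have "FP A S' B p = (\<Prod>i\<in>UNIV. gfun (\<phi> i) (p $ i))"
          unfolding FP_def A_def S'_def B_def by (rule prod_face[symmetric])
        ultimately show ?thesis by simp
      qed
      have cover: "E \<subseteq> (\<Union>x\<in>G \<times> UNIV. S x)"
      proof
        fix Y assume YE: "Y \<in> E"
        define \<phi> where "\<phi> = (\<lambda>i. ty k t (Y i))"
        have \<phi>G: "\<phi> \<in> G" using YE by (auto simp: G_def \<Phi>_def \<phi>_def ty_def)
        have "\<exists>j. \<eta> \<le> \<bar>real (cnt t (Y j)) / t - p $ j\<bar>"
        proof (rule ccontr)
          assume "\<not> ?thesis"
          hence "\<And>j. \<bar>qv t Y $ j - p $ j\<bar> \<le> \<eta>" by (auto simp: qv_def not_le less_imp_le)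
          hence "dist (qv t Y) p \<le> real n * \<eta>" unfolding n_def by (rule dist_le_card)
          hence "dist (qv t Y) p < d1" using n\<eta> by simp
          hence "dist (f (qv t Y)) (f p) < 3/14" using D1[OF p qv_cube] by simp
          moreover have "1/2 \<le> f (qv t Y)" using YE by (simp add: E_def)
          ultimately show False using False by (auto simp: dist_real_def)
        qed
        then obtain j where j: "\<eta> \<le> \<bar>real (cnt t (Y j)) / t - p $ j\<bar>" by blast
        have "Y \<in> S (\<phi>, j)" using j by (auto simp: S_def Bs_def \<phi>_def)
        thus "Y \<in> (\<Union>x\<in>G \<times> UNIV. S x)" using \<phi>G by blast
      qed
      have trm: "measure_pmf.prob (Qpmf t p) (S x) \<le> C ^ (2 * n) * Dq * (f p / c)" if xin: "x \<in> G \<times> UNIV" for x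
      proof -
        obtain \<phi> j where x: "x = (\<phi>, j)" and \<phi>G: "\<phi> \<in> G" using xin by auto
        have \<phi>i: "\<phi> i \<in> {0,1,2}" for i using \<phi>G by (auto simp: G_def \<Phi>_def)
        define bnd where "bnd = (\<lambda>i. C\<^sup>2 * gfun (\<phi> i) (p $ i) ^ m * (if i = j then Dq else 1))"
        have "measure_pmf.prob (Qpmf t p) (S x) = (\<Prod>i\<in>UNIV. measure_pmf.prob (coins t (p $ i)) (Bs \<phi> j i))"
          unfolding x S_def by (simp add: prob_Q_Pi)
        also have "\<dots> \<le> (\<Prod>i\<in>UNIV. bnd i)"
        proof (rule prod_mono)
          fix i :: 'n
          have g0: "0 \<le> gfun (\<phi> i) (p $ i)" "gfun (\<phi> i) (p $ i) \<le> 1" using pi[of i] by (auto intro: gfun_nonneg gfun_le1)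
          have "measure_pmf.prob (coins t (p $ i)) (Bs \<phi> j i) \<le> bnd i"
          proof (cases "i = j")
            case True
            have "measure_pmf.prob (coins t (p $ i)) (Bs \<phi> j i)
                \<le> real (t choose (2*m)) * gfun (\<phi> i) (p $ i) ^ m * sqrt (2 * exp (-2 * real t * \<eta>\<^sup>2))"
            proof -
              have "Bs \<phi> j i = {y. ty (2*m) t y = \<phi> i \<and> \<bar>real (cnt t y) / t - p $ i\<bar> \<ge> \<eta>}"
                using True by (simp add: Bs_def k_def)
              thus ?thesis
                by (simp only:) (rule dev_bound, use t2k pi \<phi>i tpos \<eta> in \<open>auto simp: k_def\<close>)
            qed
            also have "\<dots> = C * gfun (\<phi> i) (p $ i) ^ m * Dq" by (simp add: C_def Dq_def k_def)
            also have "\<dots> \<le> C\<^sup>2 * gfun (\<phi> i) (p $ i) ^ m * Dq"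
              using C1 g0 Dq0 by (intro mult_right_mono) (auto simp: power2_eq_square)
            finally show ?thesis using True by (simp add: bnd_def)
          next
            case False
            have "measure_pmf.prob (coins t (p $ i)) (Bs \<phi> j i) \<le> C\<^sup>2 * gfun (\<phi> i) (p $ i) ^ k"
            proof -
              have "Bs \<phi> j i = {y. ty k t y = \<phi> i}"
                using False by (simp add: Bs_def)
              thus ?thesis unfolding C_def
                by (simp only:) (rule type_bound, use t2k pi \<phi>i in auto)
            qed
            also have "\<dots> \<le> C\<^sup>2 * gfun (\<phi> i) (p $ i) ^ m"
              by (intro mult_left_mono power_decreasing) (use g0 in \<open>auto simp: k_def\<close>)
            finally show ?thesis using False by (simp add: bnd_def)
          qed
          thus "0 \<le> measure_pmf.prob (coins t (p $ i)) (Bs \<phi> j i) \<and> measure_pmf.prob (coins t (p $ i)) (Bs \<phi> j i) \<le> bnd i"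
            by simp
        qed
        also have "(\<Prod>i\<in>UNIV. bnd i) = C ^ (2 * n) * (\<Prod>i\<in>UNIV. gfun (\<phi> i) (p $ i)) ^ m * Dq"
          unfolding bnd_def prod.distrib prod_power_distrib
          by (simp add: prod.delta n_def power_mult)
        also have "\<dots> \<le> C ^ (2 * n) * (f p / c) * Dq"
        proof -
          have "(\<Prod>i\<in>UNIV. gfun (\<phi> i) (p $ i)) ^ m \<le> f p / c"
            using good[OF \<phi>G] c by (simp add: field_simps)
          thus ?thesis using C1 Dq0 by (intro mult_right_mono mult_left_mono) auto
        qed
        finally show ?thesis by (simp add: mult_ac)
      qed
      have "measure_pmf.prob (Qpmf t p) E \<le> measure_pmf.prob (Qpmf t p) (\<Union>x\<in>G \<times> UNIV. S x)"
        by (rule measure_pmf.finite_measure_mono[OF cover]) simp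
      also have "\<dots> \<le> (\<Sum>x\<in>G \<times> UNIV. measure_pmf.prob (Qpmf t p) (S x))"
        by (rule measure_pmf.finite_measure_subadditive_finite[OF finG]) simp
      also have "\<dots> \<le> real (card (G \<times> (UNIV :: 'n set))) * (C ^ (2 * n) * Dq * (f p / c))"
        by (rule sum_bounded_above) (use trm in auto)
      also have "\<dots> \<le> real (card \<Phi> * n) * (C ^ (2 * n) * Dq * (f p / c))"
        using cardG C1 Dq0 c range p by (intro mult_right_mono) (auto simp del: of_nat_mult)
      also have "\<dots> = (K * C ^ (2 * n) * Dq) * f p" using c by (simp add: K_def field_simps)
      also have "\<dots> \<le> 7/2 * f p"
        using Kt range p by (intro mult_right_mono) (auto simp: C_def Dq_def)
      finally show ?thesis using PE by simp
    qed
    show "(1/8) * f p \<le> f p - (1/4) * measure_pmf.prob (sample_pmf t p) {X. f (emp_mean t X) \<ge> 1/2}"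
      using main unfolding P_def by linarith
  qed
qed


end
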